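(* Let $\mathcal K$ be an abstract Krivine structure. Define on $\mathcal P(\Pi)$ the relation $P\sqsubseteq Q$ iff there is $t\in\mathrm{QP}$ with $t\perp\pi$ for every $\pi\in\{s\cdot\rho: s\in{}^\perp P,\ \rho\in Q\}$, and let $\sqsubseteq_\bullet$ be its restriction to $\mathcal P_\bullet(\Pi)$. Then the inclusion $(\mathcal P_\bullet(\Pi),\sqsubseteq_\bullet)\hookrightarrow(\mathcal P(\Pi),\sqsubseteq)$ is an equivalence of preorders.
   Context: An abstract Krivine structure $\mathcal K$ consists of sets $\Lambda,\Pi$, a relation $\perp\subseteq\Lambda\times\Pi$, a map $\mathrm{push}$ written $t\cdot\pi$ (associating to the right), an application $ts$ on $\Lambda$, a subset $\mathrm{QP}\subseteq\Lambda$ closed under application, and $\mathsf K,\mathsf S\in\mathrm{QP}$ with: $t\perp s\cdot\pi\Rightarrow ts\perp\pi$; $t\perp\pi\Rightarrow\mathsf K\perp t\cdot s\cdot\pi$; $tu(su)\perp\pi\Rightarrow\mathsf S\perp t\cdot s\cdot u\cdot\pi$. Polars: $L^\perp=\{\pi:\forall t\in L,\ t\perp\pi\}$, ${}^\perp P=\{t:\forall\pi\in P,\ t\perp\pi\}$; $\overline P=({}^\perp P)^\perp$; $\widehat P=\bigcup_{\pi\in P}\overline{\{\pi\}}$; $\mathcal P_\bullet(\Pi)=\{P:\widehat P=P\}$. A monotone map $f$ between preorders is an equivalence if there is a monotone $g$ in the other direction with $g\circ f$ and $f\circ g$ each pointwise isomorphic (mutually $\le$) to the identity. *)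

theory Defs
  imports Main
begin

text \<open>Abstract Krivine structure with carriers Lam (terms) and Pi (stacks),
  orthogonality relation perp, push operation, application app,
  the set QP of quasi-proofs and the combinators K and S.\<close>

definition aks ::
  "'l set \<Rightarrow> 'p set \<Rightarrow> ('l \<Rightarrow> 'p \<Rightarrow> bool) \<Rightarrow> ('l \<Rightarrow> 'p \<Rightarrow> 'p) \<Rightarrow>
   ('l \<Rightarrow> 'l \<Rightarrow> 'l) \<Rightarrow> 'l set \<Rightarrow> 'l \<Rightarrow> 'l \<Rightarrow> bool" where
  "aks Lam Pi perp push app QP K S \<longleftrightarrow>
     (\<forall>t \<pi>. perp t \<pi> \<longrightarrow> t \<in> Lam \<and> \<pi> \<in> Pi) \<and>
     (\<forall>t\<in>Lam. \<forall>\<pi>\<in>Pi. push t \<pi> \<in> Pi) \<and>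
     (\<forall>t\<in>Lam. \<forall>s\<in>Lam. app t s \<in> Lam) \<and>
     QP \<subseteq> Lam \<and>
     (\<forall>t\<in>QP. \<forall>s\<in>QP. app t s \<in> QP) \<and>
     K \<in> QP \<and> S \<in> QP \<and>
     (\<forall>t\<in>Lam. \<forall>s\<in>Lam. \<forall>\<pi>\<in>Pi. perp t (push s \<pi>) \<longrightarrow> perp (app t s) \<pi>) \<and>
     (\<forall>t\<in>Lam. \<forall>s\<in>Lam. \<forall>\<pi>\<in>Pi. perp t \<pi> \<longrightarrow> perp K (push t (push s \<pi>))) \<and>
     (\<forall>t\<in>Lam. \<forall>s\<in>Lam. \<forall>u\<in>Lam. \<forall>\<pi>\<in>Pi.
        perp (app (app t u) (app s u)) \<pi> \<longrightarrow> perp S (push t (push s (push u \<pi>))))"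

definition polarL :: "'p set \<Rightarrow> ('l \<Rightarrow> 'p \<Rightarrow> bool) \<Rightarrow> 'l set \<Rightarrow> 'p set" where
  "polarL Pi perp L = {\<pi> \<in> Pi. \<forall>t\<in>L. perp t \<pi>}"

definition polarP :: "'l set \<Rightarrow> ('l \<Rightarrow> 'p \<Rightarrow> bool) \<Rightarrow> 'p set \<Rightarrow> 'l set" where
  "polarP Lam perp P = {t \<in> Lam. \<forall>\<pi>\<in>P. perp t \<pi>}"

definition bicl :: "'l set \<Rightarrow> 'p set \<Rightarrow> ('l \<Rightarrow> 'p \<Rightarrow> bool) \<Rightarrow> 'p set \<Rightarrow> 'p set" where
  "bicl Lam Pi perp P = polarL Pi perp (polarP Lam perp P)"

definition hatcl :: "'l set \<Rightarrow> 'p set \<Rightarrow> ('l \<Rightarrow> 'p \<Rightarrow> bool) \<Rightarrow> 'p set \<Rightarrow> 'p set" where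
  "hatcl Lam Pi perp P = (\<Union>\<pi>\<in>P. bicl Lam Pi perp {\<pi>})"

definition Pbullet :: "'l set \<Rightarrow> 'p set \<Rightarrow> ('l \<Rightarrow> 'p \<Rightarrow> bool) \<Rightarrow> 'p set set" where
  "Pbullet Lam Pi perp = {P. P \<subseteq> Pi \<and> hatcl Lam Pi perp P = P}"

definition sqle ::
  "'l set \<Rightarrow> ('l \<Rightarrow> 'p \<Rightarrow> bool) \<Rightarrow> ('l \<Rightarrow> 'p \<Rightarrow> 'p) \<Rightarrow> 'l set \<Rightarrow> 'p set \<Rightarrow> 'p set \<Rightarrow> bool" where
  "sqle Lam perp push QP P Q \<longleftrightarrow>
     (\<exists>t\<in>QP. \<forall>\<pi> \<in> {push s \<rho> | s \<rho>. s \<in> polarP Lam perp P \<and> \<rho> \<in> Q}. perp t \<pi>)"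

definition preorder_equivalence ::
  "'a set \<Rightarrow> ('a \<Rightarrow> 'a \<Rightarrow> bool) \<Rightarrow> 'b set \<Rightarrow> ('b \<Rightarrow> 'b \<Rightarrow> bool) \<Rightarrow> ('a \<Rightarrow> 'b) \<Rightarrow> bool" where
  "preorder_equivalence A leA B leB f \<longleftrightarrow>
     f ` A \<subseteq> B \<and>
     (\<forall>x\<in>A. \<forall>y\<in>A. leA x y \<longrightarrow> leB (f x) (f y)) \<and>
     (\<exists>g. g ` B \<subseteq> A \<and>
          (\<forall>x\<in>B. \<forall>y\<in>B. leB x y \<longrightarrow> leA (g x) (g y)) \<and>
          (\<forall>x\<in>A. leA (g (f x)) x \<and> leA x (g (f x))) \<and>
          (\<forall>y\<in>B. leB (f (g y)) y \<and> leB y (f (g y))))"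

end

theory Submission
  imports Defs
begin

lemma sub_hat: "P \<subseteq> Pi \<Longrightarrow> P \<subseteq> hatcl Lam Pi perp P"
  unfolding hatcl_def bicl_def polarL_def polarP_def by blast

lemma hat_Pi: "hatcl Lam Pi perp P \<subseteq> Pi"
  unfolding hatcl_def bicl_def polarL_def by blast

lemma hat_hat: "hatcl Lam Pi perp (hatcl Lam Pi perp P) \<subseteq> hatcl Lam Pi perp P"
  unfolding hatcl_def bicl_def polarL_def polarP_def by blast

lemma polar_hat: "polarP Lam perp (hatcl Lam Pi perp P) \<subseteq> polarP Lam perp P"
  if "P \<subseteq> Pi" using sub_hat[OF that] unfolding polarP_def by blast

lemma polar_hat2: "polarP Lam perp P \<subseteq> polarP Lam perp (hatcl Lam Pi perp P)"
  unfolding hatcl_def bicl_def polarL_def polarP_def by blast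

lemma axr:
  assumes A: "aks Lam Pi perp push app QP K S"
  shows "\<And>t \<pi>. t \<in> Lam \<Longrightarrow> \<pi> \<in> Pi \<Longrightarrow> push t \<pi> \<in> Pi"
    "\<And>t s. t \<in> Lam \<Longrightarrow> s \<in> Lam \<Longrightarrow> app t s \<in> Lam" "QP \<subseteq> Lam"
    "\<And>t s. t \<in> QP \<Longrightarrow> s \<in> QP \<Longrightarrow> app t s \<in> QP" "K \<in> QP" "S \<in> QP"
    "\<And>t s \<pi>. t \<in> Lam \<Longrightarrow> s \<in> Lam \<Longrightarrow> \<pi> \<in> Pi \<Longrightarrow> perp t (push s \<pi>) \<Longrightarrow> perp (app t s) \<pi>"
    "\<And>t s \<pi>. t \<in> Lam \<Longrightarrow> s \<in> Lam \<Longrightarrow> \<pi> \<in> Pi \<Longrightarrow> perp t \<pi> \<Longrightarrow> perp K (push t (push s \<pi>))"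
    "\<And>t s u \<pi>. t \<in> Lam \<Longrightarrow> s \<in> Lam \<Longrightarrow> u \<in> Lam \<Longrightarrow> \<pi> \<in> Pi \<Longrightarrow>
        perp (app (app t u) (app s u)) \<pi> \<Longrightarrow> perp S (push t (push s (push u \<pi>)))"
  using A unfolding aks_def by blast+

lemma I_ok:
  assumes A: "aks Lam Pi perp push app QP K S"
  shows "app (app S K) K \<in> QP \<and> (\<forall>s \<pi>. s \<in> Lam \<longrightarrow> \<pi> \<in> Pi \<longrightarrow> perp s \<pi> \<longrightarrow>
      perp (app (app S K) K) (push s \<pi>))"
proof -
  note ax = axr[OF A]
  have KL: "K \<in> Lam" "S \<in> Lam" using ax(3,5,6) by blast+
  show ?thesis
  proof (intro conjI allI impI)
    show "app (app S K) K \<in> QP" by (intro ax(4) ax(5) ax(6))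
    fix s \<pi> assume s: "s \<in> Lam" and p: "\<pi> \<in> Pi" and h: "perp s \<pi>"
    have Ks: "app K s \<in> Lam" by (rule ax(2)[OF KL(1) s])
    have KsP: "push (app K s) \<pi> \<in> Pi" by (rule ax(1)[OF Ks p])
    have sp: "push s \<pi> \<in> Pi" by (rule ax(1)[OF s p])
    have Ksp: "push K (push s \<pi>) \<in> Pi" by (rule ax(1)[OF KL(1) sp])
    have SK: "app S K \<in> Lam" by (rule ax(2)[OF KL(2) KL(1)])
    have "perp K (push s (push (app K s) \<pi>))" by (rule ax(8)[OF s Ks p h])
    hence "perp (app K s) (push (app K s) \<pi>)" by (rule ax(7)[OF KL(1) s KsP])
    hence "perp (app (app K s) (app K s)) \<pi>" by (rule ax(7)[OF Ks Ks p])
    hence "perp S (push K (push K (push s \<pi>)))" by (rule ax(9)[OF KL(1) KL(1) s p])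
    hence "perp (app S K) (push K (push s \<pi>))" by (rule ax(7)[OF KL(2) KL(1) Ksp])
    thus "perp (app (app S K) K) (push s \<pi>)" by (rule ax(7)[OF SK KL(1) sp])
  qed
qed

lemma trans_sq:
  assumes A: "aks Lam Pi perp push app QP K S"
    and Q: "Q \<subseteq> Pi" and R: "R \<subseteq> Pi"
    and pq: "sqle Lam perp push QP P Q" and qr: "sqle Lam perp push QP Q R"
  shows "sqle Lam perp push QP P R"
proof -
  note ax = axr[OF A]
  have KL: "K \<in> Lam" "S \<in> Lam" using ax(3,5,6) by blast+
  obtain t where t: "t \<in> QP" and ht: "\<And>s \<rho>. s \<in> polarP Lam perp P \<Longrightarrow> \<rho> \<in> Q \<Longrightarrow> perp t (push s \<rho>)"
    using pq unfolding sqle_def by blast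
  obtain u where u: "u \<in> QP" and hu: "\<And>s \<rho>. s \<in> polarP Lam perp Q \<Longrightarrow> \<rho> \<in> R \<Longrightarrow> perp u (push s \<rho>)"
    using qr unfolding sqle_def by blast
  have tL: "t \<in> Lam" and uL: "u \<in> Lam" using t u ax(3) by blast+
  show ?thesis unfolding sqle_def
  proof (rule bexI[of _ "app (app S (app K u)) t"], clarify)
    fix s \<pi> assume s: "s \<in> polarP Lam perp P" and p: "\<pi> \<in> R"
    have sL: "s \<in> Lam" using s unfolding polarP_def by blast
    have pP: "\<pi> \<in> Pi" using p R by blast
    have tsL: "app t s \<in> Lam" by (rule ax(2)[OF tL sL])
    have Ku: "app K u \<in> Lam" by (rule ax(2)[OF KL(1) uL])
    have tsp: "push (app t s) \<pi> \<in> Pi" by (rule ax(1)[OF tsL pP])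
    have stsp: "push s (push (app t s) \<pi>) \<in> Pi" by (rule ax(1)[OF sL tsp])
    have sp: "push s \<pi> \<in> Pi" by (rule ax(1)[OF sL pP])
    have tsp2: "push t (push s \<pi>) \<in> Pi" by (rule ax(1)[OF tL sp])
    have SKu: "app S (app K u) \<in> Lam" by (rule ax(2)[OF KL(2) Ku])
    have "\<forall>\<rho>\<in>Q. perp (app t s) \<rho>"
    proof
      fix \<rho> assume r: "\<rho> \<in> Q"
      have "\<rho> \<in> Pi" using r Q by blast
      thus "perp (app t s) \<rho>" by (rule ax(7)[OF tL sL _ ht[OF s r]])
    qed
    hence "app t s \<in> polarP Lam perp Q" unfolding polarP_def using tsL by blast
    hence "perp u (push (app t s) \<pi>)" using hu p by blast
    hence "perp K (push u (push s (push (app t s) \<pi>)))" by (rule ax(8)[OF uL sL tsp])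
    hence "perp (app K u) (push s (push (app t s) \<pi>))" by (rule ax(7)[OF KL(1) uL stsp])
    hence "perp (app (app K u) s) (push (app t s) \<pi>)" by (rule ax(7)[OF Ku sL tsp])
    hence "perp (app (app (app K u) s) (app t s)) \<pi>" by (rule ax(7)[OF ax(2)[OF Ku sL] tsL pP])
    hence "perp S (push (app K u) (push t (push s \<pi>)))" by (rule ax(9)[OF Ku tL sL pP])
    hence "perp (app S (app K u)) (push t (push s \<pi>))" by (rule ax(7)[OF KL(2) Ku tsp2])
    thus "perp (app (app S (app K u)) t) (push s \<pi>)" by (rule ax(7)[OF SKu tL sp])
  next
    show "app (app S (app K u)) t \<in> QP" by (intro ax(4) ax(5) ax(6) t u)
  qed
qed

lemma le_hat:
  assumes A: "aks Lam Pi perp push app QP K S" and P: "P \<subseteq> Pi"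
  shows "sqle Lam perp push QP P (hatcl Lam Pi perp P)"
    "sqle Lam perp push QP (hatcl Lam Pi perp P) P"
proof -
  have I1: "app (app S K) K \<in> QP" using I_ok[OF A] by (rule conjunct1)
  have I2: "\<And>s \<pi>. s \<in> Lam \<Longrightarrow> \<pi> \<in> Pi \<Longrightarrow> perp s \<pi> \<Longrightarrow>
      perp (app (app S K) K) (push s \<pi>)" using I_ok[OF A] by simp
  show "sqle Lam perp push QP P (hatcl Lam Pi perp P)"
    unfolding sqle_def
  proof (rule bexI[OF _ I1], clarify)
    fix s \<rho> assume s: "s \<in> polarP Lam perp P" and r: "\<rho> \<in> hatcl Lam Pi perp P"
    have "s \<in> polarP Lam perp (hatcl Lam Pi perp P)" using s polar_hat2 by fast
    hence "s \<in> Lam" "perp s \<rho>" using r unfolding polarP_def by auto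
    moreover have "\<rho> \<in> Pi" using r hat_Pi by fast
    ultimately show "perp (app (app S K) K) (push s \<rho>)" using I2 by simp
  qed
  show "sqle Lam perp push QP (hatcl Lam Pi perp P) P"
    unfolding sqle_def
  proof (rule bexI[OF _ I1], clarify)
    fix s \<rho> assume s: "s \<in> polarP Lam perp (hatcl Lam Pi perp P)" and r: "\<rho> \<in> P"
    have "s \<in> polarP Lam perp P" using s polar_hat[OF P] by fast
    hence "s \<in> Lam" "perp s \<rho>" using r unfolding polarP_def by auto
    moreover have "\<rho> \<in> Pi" using r P by fast
    ultimately show "perp (app (app S K) K) (push s \<rho>)" using I2 by simp
  qed
qed

theorem mainTheorem9:
  assumes "aks Lam Pi perp push app QP K S"
  shows "preorder_equivalence (Pbullet Lam Pi perp) (sqle Lam perp push QP)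
           (Pow Pi) (sqle Lam perp push QP) (\<lambda>P. P)"
  unfolding preorder_equivalence_def
proof (intro conjI ballI impI exI[of _ "hatcl Lam Pi perp"])
  show "(\<lambda>P. P) ` Pbullet Lam Pi perp \<subseteq> Pow Pi" unfolding Pbullet_def by auto
  show "hatcl Lam Pi perp ` Pow Pi \<subseteq> Pbullet Lam Pi perp"
  proof
    fix X assume "X \<in> hatcl Lam Pi perp ` Pow Pi"
    then obtain P where X: "X = hatcl Lam Pi perp P" by (rule imageE)
    have "hatcl Lam Pi perp X = X" unfolding X
      by (rule equalityI[OF hat_hat sub_hat[OF hat_Pi]])
    thus "X \<in> Pbullet Lam Pi perp" unfolding Pbullet_def using X hat_Pi by simp
  qed
  fix x assume x: "x \<in> Pbullet Lam Pi perp"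
  hence xP: "x \<subseteq> Pi" unfolding Pbullet_def by simp
  show "sqle Lam perp push QP (hatcl Lam Pi perp x) x"
       "sqle Lam perp push QP x (hatcl Lam Pi perp x)" using le_hat[OF assms xP] by auto
next
  fix y assume y: "y \<in> Pow Pi"
  hence yP: "y \<subseteq> Pi" by blast
  show "sqle Lam perp push QP (hatcl Lam Pi perp y) y"
       "sqle Lam perp push QP y (hatcl Lam Pi perp y)" using le_hat[OF assms yP] by auto
next
  fix x y assume "x \<in> Pbullet Lam Pi perp" "y \<in> Pbullet Lam Pi perp"
    "sqle Lam perp push QP x y"
  thus "sqle Lam perp push QP x y" by simp
next
  fix x y assume x: "x \<in> Pow Pi" and y: "y \<in> Pow Pi" and h: "sqle Lam perp push QP x y"
  have xP: "x \<subseteq> Pi" and yP: "y \<subseteq> Pi" using x y by blast+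
  have 1: "sqle Lam perp push QP x (hatcl Lam Pi perp y)"
    by (rule trans_sq[OF assms yP hat_Pi h le_hat(1)[OF assms yP]])
  show "sqle Lam perp push QP (hatcl Lam Pi perp x) (hatcl Lam Pi perp y)"
    by (rule trans_sq[OF assms xP hat_Pi le_hat(2)[OF assms xP] 1])
qed

end
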